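(* Let $G_{\max}>0$ and $\mu>0$ be real constants, and let $N_r\ge 1$ and $N_t\ge 2$ be integers. Let $\Delta G_{1},\dots,\Delta G_{2N_t}$ be i.i.d. half-normal random variables, $\Delta G_j\sim|\mathcal{N}(0,G_{\max}^2/9)|$ (i.e. $\Delta G_j=|Z_j|$ with $Z_j\sim\mathcal{N}(0,G_{\max}^2/9)$), and set $T_j=\Delta G_j/\mu$ for $j=1,\dots,2N_t$. Define the row latency $T^{\mathsf{row}}=\max_{1\le j\le 2N_t}T_j$ and the expected write latency $T_{\mathsf{write}}=2N_r\,\mathbb{E}[T^{\mathsf{row}}]$. Then $$T_{\mathsf{write}}\le \frac{2\sqrt{2}\,G_{\max}}{3\mu}\,N_r\left(\sqrt{\ln N_t}+\frac{1}{\sqrt{\pi}\,\ln N_t}\right).$$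
   Context: Interpretation (model from the paper): a real-mapped $N_r\times N_t$ complex Rayleigh-fading channel matrix (a $2N_r\times 2N_t$ real matrix whose entries are $\mathcal{N}(0,G_{\max}^2/9)$, scaled by the three-sigma rule into conductance range $[-G_{\max},G_{\max}]$) is written row by row into a fully reset one-transistor-one-resistor RRAM array using differential device pairs; each device's conductance must increase by $\Delta G_j$, the magnitude of its target entry. Under the write-without-verification scheme the conductance grows at deterministic rate $\mu$ (in expectation), so writing a device takes time $\Delta G_j/\mu$; a row takes the maximum of its $2N_t$ device times, and the real-mapped matrix consists of two identical processes of $N_r$ rows each, giving $T_{\mathsf{write}}=2N_r\mathbb{E}[T^{\mathsf{row}}]$. *)

theory Defs
  imports "HOL-Probability.Probability"
begin

definition row_latency :: "real \<Rightarrow> nat \<Rightarrow> (nat \<Rightarrow> 'a \<Rightarrow> real) \<Rightarrow> 'a \<Rightarrow> real" where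
  "row_latency \<mu> Nt Z \<omega> = Max ((\<lambda>j. \<bar>Z j \<omega>\<bar> / \<mu>) ` {..<2 * Nt})"

end

theory Submission
  imports Defs
begin

lemma lim_x_exp:
  fixes k :: real assumes k: "k > 0"
  shows "((\<lambda>x. x * exp (-(x^2)/k)) \<longlongrightarrow> 0) at_top"
proof (rule tendsto_sandwich[of "\<lambda>x. 0" _ _ "\<lambda>x. k / x"])
  show "\<forall>\<^sub>F x in at_top. 0 \<le> x * exp (-(x^2)/k)"
    using eventually_ge_at_top[of "0::real"] by eventually_elim simp
  show "\<forall>\<^sub>F x in at_top. x * exp (-(x^2)/k) \<le> k / x"
    using eventually_gt_at_top[of "0::real"]
  proof eventually_elim
    case (elim x)
    have e: "x^2/k \<le> exp (x^2/k)" using exp_ge_add_one_self[of "x^2/k"] by linarith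
    have pos: "0 < x^2/k" using elim k by simp
    have "x * exp (-(x^2)/k) = x / exp (x^2/k)" by (simp add: exp_minus field_simps)
    also have "\<dots> \<le> x / (x^2/k)" using e pos elim k by (intro divide_left_mono) (auto simp: zero_less_mult_iff)
    also have "\<dots> = k / x" using elim k by (simp add: field_simps power2_eq_square)
    finally show ?case .
  qed
  show "((\<lambda>x. k / x) \<longlongrightarrow> 0) at_top"
    by (intro tendsto_divide_0[OF tendsto_const] filterlim_at_top_imp_at_infinity filterlim_ident)
qed simp

lemma lim_exp:
  fixes k :: real assumes k: "k > 0"
  shows "((\<lambda>x. exp (-(x^2)/k)) \<longlongrightarrow> 0) at_top"
proof (rule tendsto_sandwich[of "\<lambda>x. 0" _ _ "\<lambda>x. x * exp (-(x^2)/k)"])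
  show "\<forall>\<^sub>F x in at_top. 0 \<le> exp (-(x^2)/k)" by simp
  show "\<forall>\<^sub>F x in at_top. exp (-(x^2)/k) \<le> x * exp (-(x^2)/k)"
    using eventually_ge_at_top[of "1::real"] by eventually_elim simp
  show "((\<lambda>x. x * exp (-(x^2)/k)) \<longlongrightarrow> 0) at_top" by (rule lim_x_exp[OF k])
qed simp


lemma gauss_half_tail:
  fixes sg t :: real assumes sg: "sg>0" and t: "t>0"
  shows "(\<integral>\<^sup>+x. ennreal (normal_density 0 sg x * max 0 (x - t)) \<partial>lborel)
         \<le> ennreal (sg^4/t^2 * normal_density 0 sg t)"
proof -
  define c where "c = 1 / sqrt (2 * pi * sg\<^sup>2)"
  have c: "c \<ge> 0" unfolding c_def by simp
  have p: "normal_density 0 sg x = c * exp (-(x^2)/(2 * sg^2))" for x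
    unfolding normal_density_def c_def by simp
  define g where "g x = c * exp (-(x^2)/(2 * sg^2)) * (x * (sg^4/t^2 + sg^2 * (x-t)/t)/sg^2 - sg^2/t)" for x
  define F where "F x = - (c * exp (-(x^2)/(2 * sg^2)) * (sg^4/t^2 + sg^2 * (x-t)/t))" for x
  have key: "x - t \<le> x * (sg^4/t^2 + sg^2 * (x-t)/t)/sg^2 - sg^2/t" if "t \<le> x" for x
  proof -
    have "x * (sg^4/t^2 + sg^2 * (x-t)/t)/sg^2 - sg^2/t - (x - t) = (x - t) * (sg^2/t^2 + (x-t)/t)"
      using sg t by (simp add: field_simps power2_eq_square power4_eq_xxxx)
    also have "\<dots> \<ge> 0" using that sg t by (intro mult_nonneg_nonneg add_nonneg_nonneg) auto
    finally show ?thesis by simp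
  qed
  have pw: "ennreal (normal_density 0 sg x * max 0 (x - t)) \<le> ennreal (g x) * indicator {t..} x" for x
  proof (cases "t \<le> x")
    case True
    have "normal_density 0 sg x * max 0 (x - t) \<le> g x"
      unfolding p g_def using True key[OF True] c
      by (auto intro!: mult_left_mono)
    then show ?thesis using True by (simp add: ennreal_leI)
  next
    case False then show ?thesis by simp
  qed
  have "(\<integral>\<^sup>+x. ennreal (normal_density 0 sg x * max 0 (x - t)) \<partial>lborel)
        \<le> (\<integral>\<^sup>+x. ennreal (g x) * indicator {t..} x \<partial>lborel)"
    by (rule nn_integral_mono) (rule pw)
  also have "\<dots> = ennreal (0 - F t)"
  proof (rule nn_integral_FTC_atLeast)
    show "g \<in> borel_measurable borel" unfolding g_def by measurable
    show "DERIV F x :> g x" for x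
      unfolding F_def g_def using sg t
      apply (auto intro!: derivative_eq_intros)
      apply (simp add: field_simps power2_eq_square)
      apply (simp add: algebra_simps power_def)
      done
    show "0 \<le> g x" if "t \<le> x" for x
      unfolding g_def using key[OF that] that c by (auto intro!: mult_nonneg_nonneg)
    show "(F \<longlongrightarrow> 0) at_top"
    proof -
      have k: "2 * sg^2 > 0" using sg by simp
      have eqF: "F = (\<lambda>x. - (c * (sg^4/t^2 - sg^2) ) * exp (-(x^2)/(2 * sg^2))
                  - (c * (sg^2/t)) * (x * exp (-(x^2)/(2 * sg^2))))"
        unfolding F_def using t by (auto simp: fun_eq_iff field_simps)
      have "((\<lambda>x. - (c * (sg^4/t^2 - sg^2) ) * exp (-(x^2)/(2 * sg^2))
                  - (c * (sg^2/t)) * (x * exp (-(x^2)/(2 * sg^2)))) \<longlongrightarrow>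
             - (c * (sg^4/t^2 - sg^2)) * 0 - (c * (sg^2/t)) * 0) at_top"
        by (intro tendsto_intros lim_exp[OF k] lim_x_exp[OF k])
      then show ?thesis unfolding eqF by simp
    qed
  qed
  also have "0 - F t = sg^4/t^2 * normal_density 0 sg t"
    unfolding F_def p by simp
  finally show ?thesis .
qed

lemma gauss_tail:
  fixes sg t :: real assumes sg: "sg>0" and t: "t>0"
  shows "(\<integral>\<^sup>+x. ennreal (normal_density 0 sg x) * ennreal (max 0 (\<bar>x\<bar> - t)) \<partial>lborel)
         \<le> ennreal (2 * (sg^4/t^2 * normal_density 0 sg t))"
proof -
  define F where "F x = ennreal (normal_density 0 sg x * max 0 (x - t))" for x
  have Fm: "F \<in> borel_measurable borel" unfolding F_def by measurable
  have sym: "normal_density 0 sg (-x) = normal_density 0 sg x" for x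
    unfolding normal_density_def by simp
  have eq: "ennreal (normal_density 0 sg x) * ennreal (max 0 (\<bar>x\<bar> - t)) = F x + F (-x)" for x
  proof (cases "x \<ge> 0")
    case True
    then show ?thesis unfolding F_def using t
      by (simp add: ennreal_mult[symmetric] normal_density_nonneg max_def)
  next
    case False
    then show ?thesis unfolding F_def using t sym[of x]
      by (simp add: ennreal_mult[symmetric] normal_density_nonneg max_def)
  qed
  have "(\<integral>\<^sup>+x. ennreal (normal_density 0 sg x) * ennreal (max 0 (\<bar>x\<bar> - t)) \<partial>lborel)
      = (\<integral>\<^sup>+x. F x + F (-x) \<partial>lborel)" by (rule nn_integral_cong) (rule eq)
  also have "\<dots> = (\<integral>\<^sup>+x. F x \<partial>lborel) + (\<integral>\<^sup>+x. F (-x) \<partial>lborel)"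
    using Fm by (intro nn_integral_add) auto
  also have "(\<integral>\<^sup>+x. F (-x) \<partial>lborel) = (\<integral>\<^sup>+x. F x \<partial>lborel)"
  proof -
    have "(\<integral>\<^sup>+x. F x \<partial>lborel) = (\<integral>\<^sup>+x. F x \<partial>(distr lborel borel uminus))"
      by (simp add: lborel_distr_uminus)
    also have "\<dots> = (\<integral>\<^sup>+x. F (-x) \<partial>lborel)"
      by (rule nn_integral_distr) (use Fm in auto)
    finally show ?thesis by simp
  qed
  also have "(\<integral>\<^sup>+x. F x \<partial>lborel) \<le> ennreal (sg^4/t^2 * normal_density 0 sg t)"
    unfolding F_def by (rule gauss_half_tail[OF sg t])
  finally have "(\<integral>\<^sup>+x. ennreal (normal_density 0 sg x) * ennreal (max 0 (\<bar>x\<bar> - t)) \<partial>lborel)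
     \<le> ennreal (sg^4/t^2 * normal_density 0 sg t) + ennreal (sg^4/t^2 * normal_density 0 sg t)"
    by (simp add: add_mono)
  also have "\<dots> = ennreal (2 * (sg^4/t^2 * normal_density 0 sg t))"
    by (subst ennreal_plus[symmetric]) (auto simp: normal_density_nonneg)
  finally show ?thesis .
qed

lemma final_arith:
  fixes sg mu L N :: real
  assumes sg: "sg > 0" and mu: "mu > 0" and L: "L > 0" and N: "N > 0" and NL: "exp L = N"
  defines "t \<equiv> sg * sqrt (2 * L)"
  shows "t / mu + 2 * N * (2 * (sg^4/t^2 * normal_density 0 sg t)) / mu
         = sqrt 2 * sg / mu * (sqrt L + 1 / (sqrt pi * L))"
proof -
  have t2: "t^2 = 2 * L * sg^2" unfolding t_def using L by (simp add: power_mult_distrib)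
  have ex: "exp (- (t^2) / (2 * sg^2)) = 1 / N"
    using t2 sg NL by (simp add: exp_minus field_simps)
  have sq: "sqrt (2 * pi * sg\<^sup>2) = sqrt 2 * sqrt pi * sg"
    using sg by (simp add: real_sqrt_mult)
  have nd: "normal_density 0 sg t = 1 / (sqrt 2 * sqrt pi * sg) * (1 / N)"
    unfolding normal_density_def using ex sq by simp
  have s4: "sg^4 / t^2 = sg^2 / (2 * L)" using t2 sg L by (simp add: field_simps power4_eq_xxxx power2_eq_square)
  have "2 * N * (2 * (sg^4/t^2 * normal_density 0 sg t)) = 2 * sg / (sqrt 2 * sqrt pi * L)"
    unfolding s4 nd using sg L N
    by (simp add: field_simps power2_eq_square)
  also have "\<dots> = sqrt 2 * sqrt 2 * sg / (sqrt 2 * sqrt pi * L)" by simp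
  also have "\<dots> = sqrt 2 * sg / (sqrt pi * L)"
    by (simp only: mult.assoc, subst mult_divide_mult_cancel_left) auto
  finally have "2 * N * (2 * (sg^4/t^2 * normal_density 0 sg t)) = sqrt 2 * sg / (sqrt pi * L)" .
  moreover have "t = sqrt 2 * sg * sqrt L" unfolding t_def by (simp add: real_sqrt_mult)
  ultimately show ?thesis using mu by (simp add: field_simps)
qed


theorem theorem1:
  fixes M :: "'a measure" and Z :: "nat \<Rightarrow> 'a \<Rightarrow> real"
    and Gmax \<mu> :: real and Nr Nt :: nat
  assumes "prob_space M"
    and "Gmax > 0" and "\<mu> > 0" and "Nr \<ge> 1" and "Nt \<ge> 2"
    and "prob_space.indep_vars M (\<lambda>_. borel) Z {..<2 * Nt}"
    and "\<And>j. j < 2 * Nt \<Longrightarrow> distributed M lborel (Z j) (normal_density 0 (Gmax / 3))"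
  shows "2 * real Nr * prob_space.expectation M (row_latency \<mu> Nt Z)
         \<le> 2 * sqrt 2 * Gmax / (3 * \<mu>) * real Nr
             * (sqrt (ln (real Nt)) + 1 / (sqrt pi * ln (real Nt)))"
proof -
  interpret prob_space M by fact
  define sg where "sg = Gmax / 3"
  define L where "L = ln (real Nt)"
  define t where "t = sg * sqrt (2 * L)"
  define B where "B = 2 * (sg^4/t^2 * normal_density 0 sg t)"
  have sg: "sg > 0" unfolding sg_def using assms(2) by simp
  have L: "L > 0" unfolding L_def using assms(5) by simp
  have NL: "exp L = real Nt" unfolding L_def using assms(5) by simp
  have t: "t > 0" unfolding t_def using sg L by simp
  have mu: "\<mu> > 0" by fact
  have B0: "B \<ge> 0" unfolding B_def by (simp add: normal_density_nonneg)
  have meas: "Z j \<in> borel_measurable M" if "j < 2 * Nt" for j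
    using distributed_measurable[OF assms(7)[OF that]] by simp
  have Ej: "(\<integral>\<^sup>+\<omega>. ennreal (max 0 (\<bar>Z j \<omega>\<bar> - t)) \<partial>M) \<le> ennreal B" if j: "j < 2 * Nt" for j
  proof -
    have "(\<integral>\<^sup>+\<omega>. ennreal (max 0 (\<bar>Z j \<omega>\<bar> - t)) \<partial>M)
        = (\<integral>\<^sup>+x. ennreal (normal_density 0 sg x) * ennreal (max 0 (\<bar>x\<bar> - t)) \<partial>lborel)"
      using distributed_nn_integral[OF assms(7)[OF j], of "\<lambda>x. ennreal (max 0 (\<bar>x\<bar> - t))"]
      unfolding sg_def by simp
    also have "\<dots> \<le> ennreal B" unfolding B_def by (rule gauss_tail[OF sg t])
    finally show ?thesis .
  qed
  have pw: "row_latency \<mu> Nt Z \<omega> \<le> t / \<mu> + (1 / \<mu>) * (\<Sum>j<2 * Nt. max 0 (\<bar>Z j \<omega>\<bar> - t))" for \<omega>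
  proof -
    have ne: "(\<lambda>j. \<bar>Z j \<omega>\<bar> / \<mu>) ` {..<2 * Nt} \<noteq> {}"
    proof -
      have "0 \<in> {..<2 * Nt}" using assms(5) by simp
      then show ?thesis by blast
    qed
    show ?thesis unfolding row_latency_def
    proof (subst Max_le_iff[OF _ ne], simp, safe)
      fix j assume j: "j < 2 * Nt"
      have "max 0 (\<bar>Z j \<omega>\<bar> - t) \<le> (\<Sum>j<2 * Nt. max 0 (\<bar>Z j \<omega>\<bar> - t))"
        by (rule member_le_sum) (use j in auto)
      then have "\<bar>Z j \<omega>\<bar> \<le> t + (\<Sum>j<2 * Nt. max 0 (\<bar>Z j \<omega>\<bar> - t))" by linarith
      then have "\<bar>Z j \<omega>\<bar> / \<mu> \<le> (t + (\<Sum>j<2 * Nt. max 0 (\<bar>Z j \<omega>\<bar> - t))) / \<mu>"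
        using mu by (simp add: divide_right_mono)
      then show "\<bar>Z j \<omega>\<bar> / \<mu> \<le> t / \<mu> + 1 / \<mu> * (\<Sum>j<2 * Nt. max 0 (\<bar>Z j \<omega>\<bar> - t))"
        by (simp add: add_divide_distrib)
    qed
  qed
  have nn: "(\<integral>\<^sup>+\<omega>. ennreal (row_latency \<mu> Nt Z \<omega>) \<partial>M) \<le> ennreal (t / \<mu> + 2 * real Nt * B / \<mu>)"
  proof -
    have "(\<integral>\<^sup>+\<omega>. ennreal (row_latency \<mu> Nt Z \<omega>) \<partial>M)
       \<le> (\<integral>\<^sup>+\<omega>. ennreal (t / \<mu>) + ennreal (1 / \<mu>) * (\<Sum>j<2 * Nt. ennreal (max 0 (\<bar>Z j \<omega>\<bar> - t))) \<partial>M)"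
    proof (rule nn_integral_mono)
      fix \<omega>
      have "ennreal (row_latency \<mu> Nt Z \<omega>) \<le> ennreal (t / \<mu> + (1 / \<mu>) * (\<Sum>j<2 * Nt. max 0 (\<bar>Z j \<omega>\<bar> - t)))"
        by (rule ennreal_leI) (rule pw)
      also have "\<dots> = ennreal (t / \<mu>) + ennreal (1 / \<mu>) * (\<Sum>j<2 * Nt. ennreal (max 0 (\<bar>Z j \<omega>\<bar> - t)))"
      proof -
        have S0: "0 \<le> (\<Sum>j<2 * Nt. max 0 (\<bar>Z j \<omega>\<bar> - t))" by (rule sum_nonneg) auto
        have s: "(\<Sum>j<2 * Nt. ennreal (max 0 (\<bar>Z j \<omega>\<bar> - t))) = ennreal (\<Sum>j<2 * Nt. max 0 (\<bar>Z j \<omega>\<bar> - t))"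
          by (rule sum_ennreal) auto
        show ?thesis unfolding s using mu t S0
          by (simp only: ennreal_plus[symmetric] ennreal_mult[symmetric] divide_nonneg_nonneg
              mult_nonneg_nonneg less_imp_le zero_le_divide_1_iff)
      qed
      finally show "ennreal (row_latency \<mu> Nt Z \<omega>) \<le> \<dots>" .
    qed
    also have "\<dots> = (\<integral>\<^sup>+\<omega>. ennreal (t / \<mu>) \<partial>M) + (\<integral>\<^sup>+\<omega>. ennreal (1 / \<mu>) * (\<Sum>j<2 * Nt. ennreal (max 0 (\<bar>Z j \<omega>\<bar> - t))) \<partial>M)"
      using meas by (intro nn_integral_add) auto
    also have "(\<integral>\<^sup>+\<omega>. ennreal (1 / \<mu>) * (\<Sum>j<2 * Nt. ennreal (max 0 (\<bar>Z j \<omega>\<bar> - t))) \<partial>M)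
       = ennreal (1 / \<mu>) * (\<Sum>j<2 * Nt. (\<integral>\<^sup>+\<omega>. ennreal (max 0 (\<bar>Z j \<omega>\<bar> - t)) \<partial>M))"
    proof -
      have m2: "(\<lambda>\<omega>. ennreal (max 0 (\<bar>Z j \<omega>\<bar> - t))) \<in> borel_measurable M" if "j \<in> {..<2 * Nt}" for j
      proof -
        have "Z j \<in> borel_measurable M" using meas[of j] that by simp
        then show ?thesis by measurable
      qed
      have "(\<integral>\<^sup>+\<omega>. (\<Sum>j<2 * Nt. ennreal (max 0 (\<bar>Z j \<omega>\<bar> - t))) \<partial>M)
          = (\<Sum>j<2 * Nt. (\<integral>\<^sup>+\<omega>. ennreal (max 0 (\<bar>Z j \<omega>\<bar> - t)) \<partial>M))"
        by (rule nn_integral_sum) (rule m2)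
      moreover have "(\<lambda>\<omega>. \<Sum>j<2 * Nt. ennreal (max 0 (\<bar>Z j \<omega>\<bar> - t))) \<in> borel_measurable M"
        using m2 by (intro borel_measurable_sum) auto
      ultimately show ?thesis by (simp only: nn_integral_cmult)
    qed
    also have "\<dots> \<le> ennreal (1 / \<mu>) * (\<Sum>j<2 * Nt. ennreal B)"
      by (intro mult_left_mono sum_mono Ej) auto
    also have "(\<integral>\<^sup>+\<omega>. ennreal (t / \<mu>) \<partial>M) = ennreal (t / \<mu>)"
      by (simp add: emeasure_space_1)
    also have "ennreal (t / \<mu>) + ennreal (1 / \<mu>) * (\<Sum>j<2 * Nt. ennreal B) = ennreal (t / \<mu> + 2 * real Nt * B / \<mu>)"
    proof -
      have s1: "(\<Sum>j<2 * Nt. ennreal B) = ennreal (\<Sum>j<2 * Nt. B)" by (rule sum_ennreal) (use B0 in auto)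
      have s2: "(\<Sum>j<2 * Nt. B) = 2 * real Nt * B" by simp
      have a0: "0 \<le> t / \<mu>" using mu t by simp
      have b0: "0 \<le> 1 / \<mu>" using mu by simp
      have c0: "0 \<le> 2 * real Nt * B" using B0 by simp
      have "ennreal (t / \<mu>) + ennreal (1 / \<mu>) * (\<Sum>j<2 * Nt. ennreal B)
          = ennreal (t / \<mu>) + ennreal (1 / \<mu> * (2 * real Nt * B))"
        unfolding s1 s2 using b0 c0 by (simp only: ennreal_mult[symmetric])
      also have "\<dots> = ennreal (t / \<mu> + 1 / \<mu> * (2 * real Nt * B))"
        using a0 b0 c0 by (simp only: ennreal_plus[symmetric] mult_nonneg_nonneg)
      also have "t / \<mu> + 1 / \<mu> * (2 * real Nt * B) = t / \<mu> + 2 * real Nt * B / \<mu>" by simp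
      finally show ?thesis .
    qed
    finally show ?thesis by (simp add: add_left_mono)
  qed
  have bound: "prob_space.expectation M (row_latency \<mu> Nt Z) \<le> t / \<mu> + 2 * real Nt * B / \<mu>"
  proof (cases "integrable M (row_latency \<mu> Nt Z)")
    case True
    have nonneg: "row_latency \<mu> Nt Z \<omega> \<ge> 0" for \<omega>
    proof -
      have "\<bar>Z 0 \<omega>\<bar> / \<mu> \<le> row_latency \<mu> Nt Z \<omega>" unfolding row_latency_def
        using assms(5) by (intro Max_ge) auto
      moreover have "\<bar>Z 0 \<omega>\<bar> / \<mu> \<ge> 0" using mu by simp
      ultimately show ?thesis by linarith
    qed
    have "ennreal (expectation (row_latency \<mu> Nt Z)) = (\<integral>\<^sup>+\<omega>. ennreal (row_latency \<mu> Nt Z \<omega>) \<partial>M)"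
      using True nonneg by (intro nn_integral_eq_integral[symmetric]) auto
    with nn have "ennreal (expectation (row_latency \<mu> Nt Z)) \<le> ennreal (t / \<mu> + 2 * real Nt * B / \<mu>)" by simp
    then show ?thesis using mu t B0 by (subst (asm) ennreal_le_iff) auto
  next
    case False
    then show ?thesis using mu t B0 by (simp add: not_integrable_integral_eq)
  qed
  have eq: "t / \<mu> + 2 * real Nt * B / \<mu> = sqrt 2 * sg / \<mu> * (sqrt L + 1 / (sqrt pi * L))"
    unfolding B_def t_def using final_arith[OF sg mu L _ NL] assms(5) by simp
  have "2 * real Nr * expectation (row_latency \<mu> Nt Z) \<le> 2 * real Nr * (sqrt 2 * sg / \<mu> * (sqrt L + 1 / (sqrt pi * L)))"
    using bound eq by (intro mult_left_mono) auto
  also have "\<dots> = 2 * sqrt 2 * Gmax / (3 * \<mu>) * real Nr * (sqrt (ln (real Nt)) + 1 / (sqrt pi * ln (real Nt)))"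
    unfolding sg_def L_def by (simp add: field_simps)
  finally show ?thesis .
qed

end
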